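(* Let $\mu$ be a partition and write $\mathrm{Res}_\mu(t)=\sum_{j\in\mathbb{Z}}b_jt^j$. Let $k\in\mathbb{Z}$. (a) There is a removable cell of content $k$ if and only if: $b_{k-1}=b_k$ and $b_{k+1}=b_k-1$ (when $k>0$); or $b_{k+1}=b_k$ and $b_{k-1}=b_k-1$ (when $k<0$); or $b_{-1}=b_1$ and $b_0=b_1+1$ (when $k=0$). (b) There is an addable cell of content $k$ if and only if: $b_{k+1}=b_k$ and $b_{k-1}=b_k+1$ (when $k>0$); or $b_{k-1}=b_k$ and $b_{k+1}=b_k+1$ (when $k<0$); or $b_{-1}=b_0=b_1$ (when $k=0$). (c) No cell of content $k$ is addable or removable if and only if: $b_{k+1}=b_k=b_{k-1}$ or $b_{k+1}=b_k-1=b_{k-1}-2$ (when $k>0$); or $b_{k+1}=b_k=b_{k-1}$ or $b_{k+1}=b_k+1=b_{k-1}+2$ (when $k<0$); or $b_{-1}=b_0=b_1+1$ or $b_1=b_0=b_{-1}+1$ (when $k=0$).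
   Context: $\mathrm{Res}_\mu(t)=\sum_{\square\in\mu}t^{c(\square)}$, where $c(i,j)=j-i$ is the content of a cell $(i,j)$ of the Young diagram $\{(i,j):1\le j\le\mu_i\}$. A cell of $\mu$ is removable if deleting it leaves a Young diagram. A cell not in $\mu$ is addable if adding it gives a Young diagram. *)

theory Defs
  imports Main
begin

definition is_partition :: "nat list \<Rightarrow> bool" where
  "is_partition mu \<longleftrightarrow> sorted (rev mu) \<and> (\<forall>x\<in>set mu. 0 < x)"

definition cells :: "nat list \<Rightarrow> (nat \<times> nat) set" where
  "cells mu = {(i, j). 1 \<le> i \<and> i \<le> length mu \<and> 1 \<le> j \<and> j \<le> mu ! (i - 1)}"

definition content :: "nat \<times> nat \<Rightarrow> int" where
  "content c = int (snd c) - int (fst c)"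

definition young_diagram :: "(nat \<times> nat) set \<Rightarrow> bool" where
  "young_diagram D \<longleftrightarrow> (\<exists>nu. is_partition nu \<and> D = cells nu)"

definition removable :: "nat list \<Rightarrow> nat \<times> nat \<Rightarrow> bool" where
  "removable mu c \<longleftrightarrow> c \<in> cells mu \<and> young_diagram (cells mu - {c})"

definition addable :: "nat list \<Rightarrow> nat \<times> nat \<Rightarrow> bool" where
  "addable mu c \<longleftrightarrow> c \<notin> cells mu \<and> young_diagram (insert c (cells mu))"

text \<open>Coefficient b_j of t^j in Res_mu(t) = sum over cells of t^content.\<close>
definition res_coeff :: "nat list \<Rightarrow> int \<Rightarrow> int" where
  "res_coeff mu j = int (card {c \<in> cells mu. content c = j})"

end

theory Submission
  imports Defs
begin


definition rl :: "nat list \<Rightarrow> nat \<Rightarrow> nat" where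
  "rl mu i = (if 1 \<le> i \<and> i \<le> length mu then mu ! (i - 1) else 0)"

lemma cells_rl: "cells mu = {(i, j). 1 \<le> i \<and> 1 \<le> j \<and> j \<le> rl mu i}"
  unfolding cells_def rl_def by (auto split: if_splits)

lemma rl_anti:
  assumes "is_partition mu" "1 \<le> a" "a \<le> b"
  shows "rl mu b \<le> rl mu a"
proof (cases "b \<le> length mu")
  case True
  have "mu ! (b - 1) \<le> mu ! (a - 1)"
    using assms True by (intro sorted_rev_nth_mono) (auto simp: is_partition_def)
  then show ?thesis using assms True by (simp add: rl_def)
qed (simp add: rl_def)

lemma rl_pos:
  assumes "is_partition mu" "1 \<le> i"
  shows "0 < rl mu i \<longleftrightarrow> i \<le> length mu"
proof -
  have "i \<le> length mu \<Longrightarrow> 0 < mu ! (i - 1)"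
    using assms by (auto simp: is_partition_def)
  then show ?thesis using assms by (auto simp: rl_def)
qed

lemma down_closed:
  assumes "is_partition nu" "(i, j) \<in> cells nu" "1 \<le> i'" "i' \<le> i" "1 \<le> j'" "j' \<le> j"
  shows "(i', j') \<in> cells nu"
  using assms rl_anti[OF assms(1) assms(3) assms(4)] by (auto simp: cells_rl)

lemma young_of:
  assumes anti: "\<And>a b. 1 \<le> a \<Longrightarrow> a \<le> b \<Longrightarrow> g b \<le> g a"
    and pos: "\<And>i. 1 \<le> i \<Longrightarrow> 0 < g i \<longleftrightarrow> i \<le> m"
  shows "young_diagram {(i, j). 1 \<le> i \<and> 1 \<le> j \<and> j \<le> g i}"
proof -
  define nu where "nu = map g [1..<m+1]"
  have len: "length nu = m" by (simp add: nu_def)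
  have nth: "i < m \<Longrightarrow> nu ! i = g (i + 1)" for i unfolding nu_def by (simp del: upt_Suc add: nth_map_upt)
  have "is_partition nu"
    unfolding is_partition_def sorted_rev_iff_nth_mono
  proof (intro conjI allI impI ballI)
    fix i j assume "i \<le> j" "j < length nu"
    then show "nu ! j \<le> nu ! i" using len nth anti[of "i+1" "j+1"] by simp
  next
    fix x assume "x \<in> set nu"
    then obtain i where "i < m" "x = nu ! i" using len by (metis in_set_conv_nth)
    then show "0 < x" using nth pos[of "i+1"] by simp
  qed
  moreover have "rl nu i = g i" if "1 \<le> i" for i
  proof (cases "i \<le> m")
    case True
    then show ?thesis using that nth[of "i-1"] len by (simp add: rl_def)
  next
    case False
    then show ?thesis using that pos[of i] len by (simp add: rl_def)
  qed
  then have "cells nu = {(i, j). 1 \<le> i \<and> 1 \<le> j \<and> j \<le> g i}"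
    unfolding cells_rl by auto
  ultimately show ?thesis unfolding young_diagram_def by blast
qed


lemma removable_iff:
  assumes mu: "is_partition mu"
  shows "removable mu c \<longleftrightarrow>
    (\<exists>i. 1 \<le> i \<and> 1 \<le> rl mu i \<and> rl mu (i+1) < rl mu i \<and> c = (i, rl mu i))"
proof
  assume r: "removable mu c"
  then have c: "c \<in> cells mu" and yd: "young_diagram (cells mu - {c})" unfolding removable_def by simp_all
  from yd obtain nu where nu: "is_partition nu" and eq: "cells mu - {c} = cells nu"
    unfolding young_diagram_def by auto
  obtain i j where cij: "c = (i, j)" by (cases c)
  have ij: "1 \<le> i" "1 \<le> j" "j \<le> rl mu i" using c cij by (auto simp: cells_rl)
  have cnu: "c \<notin> cells nu" using eq by blast
  have "j = rl mu i"
  proof (rule ccontr)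
    assume "j \<noteq> rl mu i"
    then have "(i, j+1) \<in> cells mu" using ij by (simp add: cells_rl)
    then have "(i, j+1) \<in> cells mu - {c}" using cij by simp
    then have "(i, j+1) \<in> cells nu" using eq by simp
    then have "(i, j) \<in> cells nu" by (rule down_closed[OF nu]) (use ij in auto)
    then show False using cnu cij by simp
  qed
  moreover have "rl mu (i+1) < rl mu i"
  proof (rule ccontr)
    assume "\<not> rl mu (i+1) < rl mu i"
    then have "(i+1, j) \<in> cells mu" using ij by (simp add: cells_rl)
    then have "(i+1, j) \<in> cells mu - {c}" using cij by simp
    then have "(i+1, j) \<in> cells nu" using eq by simp
    then have "(i, j) \<in> cells nu" by (rule down_closed[OF nu]) (use ij in auto)
    then show False using cnu cij by simp
  qed
  ultimately show "\<exists>i. 1 \<le> i \<and> 1 \<le> rl mu i \<and> rl mu (i+1) < rl mu i \<and> c = (i, rl mu i)"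
    using ij cij by auto
next
  assume "\<exists>i. 1 \<le> i \<and> 1 \<le> rl mu i \<and> rl mu (i+1) < rl mu i \<and> c = (i, rl mu i)"
  then obtain i0 where i0: "1 \<le> i0" "1 \<le> rl mu i0" "rl mu (i0+1) < rl mu i0" and c: "c = (i0, rl mu i0)"
    by blast
  define g where "g = (rl mu)(i0 := rl mu i0 - 1)"
  define m where "m = (if rl mu i0 = 1 then length mu - 1 else length mu)"
  have l0: "i0 \<le> length mu" using rl_pos[OF mu i0(1)] i0 by simp
  have l1: "rl mu i0 = 1 \<Longrightarrow> i0 = length mu"
    using rl_pos[OF mu, of "i0+1"] i0 l0 by simp
  have "young_diagram {(i, j). 1 \<le> i \<and> 1 \<le> j \<and> j \<le> g i}"
  proof (rule young_of)
    fix a b :: nat assume ab: "1 \<le> a" "a \<le> b"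
    show "g b \<le> g a"
    proof (cases "a = i0")
      case True
      then show ?thesis using ab rl_anti[OF mu, of "i0+1" b] i0 by (cases "b = i0") (auto simp: g_def)
    next
      case False
      then show ?thesis using ab rl_anti[OF mu, of a b] by (auto simp: g_def)
    qed
  next
    fix i :: nat assume i: "1 \<le> i"
    show "0 < g i \<longleftrightarrow> i \<le> m"
    proof (cases "i = i0")
      case True
      then show ?thesis using l1 l0 i0 by (auto simp: g_def m_def)
    next
      case False
      then show ?thesis using rl_pos[OF mu i] l1 i by (auto simp: g_def m_def)
    qed
  qed
  moreover have "{(i, j). 1 \<le> i \<and> 1 \<le> j \<and> j \<le> g i} = cells mu - {c}"
    using i0 c by (auto simp: g_def cells_rl split: if_splits)
  moreover have "c \<in> cells mu" using i0 c by (auto simp: cells_rl)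
  ultimately show "removable mu c" unfolding removable_def by simp
qed

lemma addable_iff:
  assumes mu: "is_partition mu"
  shows "addable mu c \<longleftrightarrow>
    (\<exists>i. 1 \<le> i \<and> (i = 1 \<or> rl mu i < rl mu (i-1)) \<and> c = (i, rl mu i + 1))"
proof
  assume r: "addable mu c"
  then have c: "c \<notin> cells mu" and yd: "young_diagram (insert c (cells mu))" unfolding addable_def by simp_all
  from yd obtain nu where nu: "is_partition nu" and eq: "insert c (cells mu) = cells nu"
    unfolding young_diagram_def by auto
  obtain i j where cij: "c = (i, j)" by (cases c)
  have cnu: "c \<in> cells nu" using eq[symmetric] by simp
  then have ij: "1 \<le> i" "1 \<le> j" using cij by (auto simp: cells_rl)
  have jg: "rl mu i < j" using c cij ij by (auto simp: cells_rl)
  have "j \<le> rl mu i + 1"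
  proof (cases "j = 1")
    case False
    have "(i, j - 1) \<in> cells nu" by (rule down_closed[OF nu cnu[unfolded cij]]) (use ij False in auto)
    then have "(i, j - 1) \<in> insert c (cells mu)" using eq by simp
    then have "(i, j - 1) \<in> cells mu" using cij False ij by auto
    then show ?thesis by (auto simp: cells_rl)
  qed simp
  moreover have "i = 1 \<or> rl mu i < rl mu (i-1)"
  proof (cases "i = 1")
    case False
    have "(i - 1, j) \<in> cells nu" by (rule down_closed[OF nu cnu[unfolded cij]]) (use ij False in auto)
    then have "(i - 1, j) \<in> insert c (cells mu)" using eq by simp
    then have "(i - 1, j) \<in> cells mu" using cij False ij by auto
    then show ?thesis using jg by (auto simp: cells_rl)
  qed simp
  ultimately show "\<exists>i. 1 \<le> i \<and> (i = 1 \<or> rl mu i < rl mu (i-1)) \<and> c = (i, rl mu i + 1)"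
    using ij cij jg by (intro exI[of _ i]) auto
next
  assume "\<exists>i. 1 \<le> i \<and> (i = 1 \<or> rl mu i < rl mu (i-1)) \<and> c = (i, rl mu i + 1)"
  then obtain i0 where i0: "1 \<le> i0" "i0 = 1 \<or> rl mu i0 < rl mu (i0-1)" and c: "c = (i0, rl mu i0 + 1)"
    by blast
  define g where "g = (rl mu)(i0 := rl mu i0 + 1)"
  define m where "m = (if rl mu i0 = 0 then length mu + 1 else length mu)"
  have l1: "rl mu i0 = 0 \<Longrightarrow> i0 = length mu + 1"
  proof -
    assume z: "rl mu i0 = 0"
    then have "length mu < i0" using rl_pos[OF mu i0(1)] by simp
    moreover have "i0 - 1 \<le> length mu"
    proof (cases "i0 = 1")
      case False
      then show ?thesis using i0 z rl_pos[OF mu, of "i0 - 1"] by simp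
    qed simp
    ultimately show ?thesis by simp
  qed
  have "young_diagram {(i, j). 1 \<le> i \<and> 1 \<le> j \<and> j \<le> g i}"
  proof (rule young_of)
    fix a b :: nat assume ab: "1 \<le> a" "a \<le> b"
    show "g b \<le> g a"
    proof (cases "b = i0")
      case True
      show ?thesis
      proof (cases "a = i0")
        case False
        then have "a \<le> i0 - 1" "i0 \<noteq> 1" using ab True by auto
        then show ?thesis using True False ab rl_anti[OF mu, of a "i0 - 1"] i0 by (auto simp: g_def)
      qed (simp add: True)
    next
      case False
      then show ?thesis using ab rl_anti[OF mu, of a b] by (auto simp: g_def)
    qed
  next
    fix i :: nat assume i: "1 \<le> i"
    show "0 < g i \<longleftrightarrow> i \<le> m"
    proof (cases "i = i0")
      case True
      then show ?thesis using rl_pos[OF mu i0(1)] l1 by (simp add: g_def m_def)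
    next
      case False
      then show ?thesis using rl_pos[OF mu i] l1 i by (auto simp: g_def m_def)
    qed
  qed
  moreover have "{(i, j). 1 \<le> i \<and> 1 \<le> j \<and> j \<le> g i} = insert c (cells mu)"
    using i0 c by (auto simp: g_def cells_rl split: if_splits)
  moreover have "c \<notin> cells mu" using i0 c by (auto simp: cells_rl)
  ultimately show "addable mu c" unfolding addable_def by simp
qed



definition ff :: "nat list \<Rightarrow> nat \<Rightarrow> int" where
  "ff mu i = int (rl mu i) - int i"

lemma ff_strict:
  assumes "is_partition mu" "1 \<le> i" "i < i'"
  shows "ff mu i' < ff mu i"
  using rl_anti[OF assms(1,2), of i'] assms(3) by (simp add: ff_def)

lemma ff_le:
  assumes "is_partition mu" "1 \<le> i" "i \<le> i'"
  shows "ff mu i' \<le> ff mu i"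
  using rl_anti[OF assms(1,2), of i'] assms(3) by (simp add: ff_def)

lemma ff_inj:
  assumes "is_partition mu" "1 \<le> i" "1 \<le> i'" "ff mu i = ff mu i'"
  shows "i = i'"
  using ff_strict[OF assms(1,2), of i'] ff_strict[OF assms(1,3), of i] assms(4)
  by (cases i i' rule: linorder_cases) auto

lemma rem_exists:
  assumes mu: "is_partition mu"
  shows "(\<exists>c. removable mu c \<and> content c = k) \<longleftrightarrow>
     (\<exists>i\<ge>1. ff mu i = k) \<and> \<not> (\<exists>i\<ge>1. ff mu i = k - 1)"
proof
  assume "\<exists>c. removable mu c \<and> content c = k"
  then obtain c where c: "removable mu c" "content c = k" by blast
  then obtain i where i0: "1 \<le> i" "1 \<le> rl mu i" "rl mu (i+1) < rl mu i" "c = (i, rl mu i)"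
    using removable_iff[OF mu] by blast
  then have i: "1 \<le> i" "1 \<le> rl mu i" "rl mu (i+1) < rl mu i" "ff mu i = k"
    using c by (auto simp: content_def ff_def)
  have "\<not> (\<exists>i'\<ge>1. ff mu i' = k - 1)"
  proof
    assume "\<exists>i'\<ge>1. ff mu i' = k - 1"
    then obtain i' where i': "1 \<le> i'" "ff mu i' = k - 1" by blast
    have "i < i'"
    proof (rule ccontr)
      assume "\<not> i < i'"
      then have "ff mu i \<le> ff mu i'" using ff_le[OF mu i'(1), of i] by simp
      then show False using i i' by simp
    qed
    then have "ff mu i' \<le> ff mu (i+1)" using ff_le[OF mu, of "i+1" i'] by simp
    then show False using i i' by (simp add: ff_def)
  qed
  then show "(\<exists>i\<ge>1. ff mu i = k) \<and> \<not> (\<exists>i\<ge>1. ff mu i = k - 1)" using i by blast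
next
  assume "(\<exists>i\<ge>1. ff mu i = k) \<and> \<not> (\<exists>i\<ge>1. ff mu i = k - 1)"
  then obtain i where i: "1 \<le> i" "ff mu i = k" and n: "\<And>i'. 1 \<le> i' \<Longrightarrow> ff mu i' \<noteq> k - 1" by blast
  have "ff mu (i+1) < ff mu i" using ff_strict[OF mu i(1), of "i+1"] by simp
  moreover have "ff mu (i+1) \<noteq> k - 1" using n by simp
  ultimately have "ff mu (i+1) \<le> k - 2" using i by simp
  then have "rl mu (i+1) < rl mu i" using i by (simp add: ff_def)
  then have "removable mu (i, rl mu i)" using removable_iff[OF mu] i by auto
  then show "\<exists>c. removable mu c \<and> content c = k" using i by (auto simp: content_def ff_def)
qed

lemma add_exists:
  assumes mu: "is_partition mu"
  shows "(\<exists>c. addable mu c \<and> content c = k) \<longleftrightarrow>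
     (\<exists>i\<ge>1. ff mu i = k - 1) \<and> \<not> (\<exists>i\<ge>1. ff mu i = k)"
proof
  assume "\<exists>c. addable mu c \<and> content c = k"
  then obtain c where c: "addable mu c" "content c = k" by blast
  then obtain i where i0: "1 \<le> i" "i = 1 \<or> rl mu i < rl mu (i-1)" "c = (i, rl mu i + 1)"
    using addable_iff[OF mu] by blast
  then have i: "1 \<le> i" "i = 1 \<or> rl mu i < rl mu (i-1)" "ff mu i = k - 1"
    using c by (auto simp: content_def ff_def)
  have "\<not> (\<exists>i'\<ge>1. ff mu i' = k)"
  proof
    assume "\<exists>i'\<ge>1. ff mu i' = k"
    then obtain i' where i': "1 \<le> i'" "ff mu i' = k" by blast
    have "i' < i"
    proof (rule ccontr)
      assume "\<not> i' < i"
      then have "ff mu i' \<le> ff mu i" using ff_le[OF mu i(1), of i'] by simp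
      then show False using i i' by simp
    qed
    then have "ff mu (i-1) \<le> ff mu i'" using ff_le[OF mu i'(1), of "i-1"] by simp
    moreover have "i \<noteq> 1" using \<open>i' < i\<close> i' by simp
    ultimately show False using i i' by (simp add: ff_def)
  qed
  then show "(\<exists>i\<ge>1. ff mu i = k - 1) \<and> \<not> (\<exists>i\<ge>1. ff mu i = k)" using i by blast
next
  assume "(\<exists>i\<ge>1. ff mu i = k - 1) \<and> \<not> (\<exists>i\<ge>1. ff mu i = k)"
  then obtain i where i: "1 \<le> i" "ff mu i = k - 1" and n: "\<And>i'. 1 \<le> i' \<Longrightarrow> ff mu i' \<noteq> k" by blast
  have "i = 1 \<or> rl mu i < rl mu (i-1)"
  proof (cases "i = 1")
    case False
    then have "ff mu i < ff mu (i-1)" using ff_strict[OF mu, of "i-1" i] i by simp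
    moreover have "ff mu (i-1) \<noteq> k" using n False i by simp
    ultimately have "k + 1 \<le> ff mu (i-1)" using i by simp
    then show ?thesis using i False by (simp add: ff_def of_nat_diff)
  qed simp
  then have a: "addable mu (i, rl mu i + 1)" using addable_iff[OF mu] i by auto
  have "content (i, rl mu i + 1) = k" using i by (simp add: content_def ff_def)
  then show "\<exists>c. addable mu c \<and> content c = k" using a by blast
qed



lemma A_finite:
  assumes mu: "is_partition mu"
  shows "finite {i. 1 \<le> i \<and> k \<le> ff mu i}"
proof (rule finite_subset)
  show "{i. 1 \<le> i \<and> k \<le> ff mu i} \<subseteq> {..nat (int (rl mu 1) - k)}"
  proof
    fix i assume "i \<in> {i. 1 \<le> i \<and> k \<le> ff mu i}"
    then have "1 \<le> i" "k \<le> ff mu i" by auto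
    moreover have "rl mu i \<le> rl mu 1" using rl_anti[OF mu, of 1 i] \<open>1 \<le> i\<close> by simp
    ultimately show "i \<in> {..nat (int (rl mu 1) - k)}" by (simp add: ff_def)
  qed
qed simp

lemma E_card:
  assumes mu: "is_partition mu"
  shows "card {i. 1 \<le> i \<and> ff mu i = k} = (if \<exists>i\<ge>1. ff mu i = k then 1 else 0)"
proof (cases "\<exists>i\<ge>1. ff mu i = k")
  case True
  then obtain i0 where i0: "1 \<le> i0" "ff mu i0 = k" by blast
  have e: "{i. 1 \<le> i \<and> ff mu i = k} = {i0}"
  proof (rule set_eqI, rule iffI)
    fix i assume "i \<in> {i. 1 \<le> i \<and> ff mu i = k}"
    then have "1 \<le> i" "ff mu i0 = ff mu i" using i0 by simp_all
    then show "i \<in> {i0}" using ff_inj[OF mu i0(1)] by blast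
  next
    fix i assume "i \<in> {i0}" then show "i \<in> {i. 1 \<le> i \<and> ff mu i = k}" using i0 by simp
  qed
  have "card {i. 1 \<le> i \<and> ff mu i = k} = 1" by (simp only: e) simp
  then show ?thesis using True by (simp only: if_True)
next
  case False
  then have e: "{i. 1 \<le> i \<and> ff mu i = k} = {}" by blast
  have "card {i. 1 \<le> i \<and> ff mu i = k} = 0" by (simp only: e card.empty)
  then show ?thesis using False by (simp only: if_False)
qed

lemma A_step:
  assumes mu: "is_partition mu"
  shows "card {i. 1 \<le> i \<and> k \<le> ff mu i} =
         card {i. 1 \<le> i \<and> k + 1 \<le> ff mu i} + card {i. 1 \<le> i \<and> ff mu i = k}"
proof -
  have "{i. 1 \<le> i \<and> k \<le> ff mu i} = {i. 1 \<le> i \<and> k + 1 \<le> ff mu i} \<union> {i. 1 \<le> i \<and> ff mu i = k}"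
    by auto
  moreover have "finite {i. 1 \<le> i \<and> ff mu i = k}"
    by (rule finite_subset[OF _ A_finite[OF mu, of k]]) auto
  ultimately show ?thesis using A_finite[OF mu, of "k+1"]
    by (simp add: card_Un_disjoint disjoint_iff)
qed

lemma b_formula:
  assumes mu: "is_partition mu"
  shows "res_coeff mu k = int (card {i. 1 \<le> i \<and> k \<le> ff mu i}) - int (nat (- k))"
proof -
  let ?A = "{i. 1 \<le> i \<and> k \<le> ff mu i}"
  let ?B = "{i \<in> ?A. 1 - k \<le> int i}"
  have "{c \<in> cells mu. content c = k} = (\<lambda>i. (i, nat (int i + k))) ` ?B"
  proof (rule set_eqI, rule iffI)
    fix c assume "c \<in> {c \<in> cells mu. content c = k}"
    then obtain i j where c: "c = (i, j)" "1 \<le> i" "1 \<le> j" "j \<le> rl mu i" "int j - int i = k"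
      by (cases c) (auto simp: cells_rl content_def)
    then have "i \<in> ?B" "j = nat (int i + k)" by (auto simp: ff_def)
    then show "c \<in> (\<lambda>i. (i, nat (int i + k))) ` ?B" using c by blast
  next
    fix c assume "c \<in> (\<lambda>i. (i, nat (int i + k))) ` ?B"
    then obtain i where i: "i \<in> ?B" "c = (i, nat (int i + k))" by blast
    then show "c \<in> {c \<in> cells mu. content c = k}"
      by (auto simp: cells_rl content_def ff_def)
  qed
  moreover have "inj_on (\<lambda>i. (i, nat (int i + k))) ?B" by (rule inj_onI) simp
  ultimately have b: "res_coeff mu k = int (card ?B)"
    by (simp add: res_coeff_def card_image)
  show ?thesis
  proof (cases "0 \<le> k")
    case True
    then have "?B = ?A" by auto
    then show ?thesis using b True by simp
  next
    case False
    define B where "B = ?B"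
    have eqA: "?A = B \<union> {1..nat (-k)}"
    proof (rule set_eqI, rule iffI)
      fix i assume "i \<in> ?A" then show "i \<in> B \<union> {1..nat (-k)}" by (auto simp: B_def)
    next
      fix i assume "i \<in> B \<union> {1..nat (-k)}"
      then show "i \<in> ?A" using False by (auto simp: ff_def B_def)
    qed
    have "B \<inter> {1..nat (-k)} = {}" by (auto simp: B_def)
    moreover have "finite B" unfolding B_def using A_finite[OF mu, of k] by (rule finite_subset[rotated]) auto
    ultimately have "card (B \<union> {1..nat (-k)}) = card B + nat (-k)" by (simp add: card_Un_disjoint)
    moreover have "card ?A = card (B \<union> {1..nat (-k)})" by (simp only: eqA)
    moreover have "card B = card ?B" by (simp only: B_def)
    ultimately have "card ?A = card ?B + nat (-k)" by simp
    then show ?thesis using b by simp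
  qed
qed



lemma arith_core:
  fixes b :: "int \<Rightarrow> int" and k x :: int
  assumes h0: "b (k+1) = x - int (nat (-(k+1)))"
    and h1: "b k = x + (if P1 then 1 else 0) - int (nat (-k))"
    and h2: "b (k-1) = x + (if P1 then 1 else 0) + (if P0 then 1 else 0) - int (nat (-(k-1)))"
  shows
   "((P1 \<and> \<not> P0) \<longleftrightarrow>
       (if k > 0 then b (k - 1) = b k \<and> b (k + 1) = b k - 1
        else if k < 0 then b (k + 1) = b k \<and> b (k - 1) = b k - 1
        else b (-1) = b 1 \<and> b 0 = b 1 + 1))
    \<and> ((P0 \<and> \<not> P1) \<longleftrightarrow>
       (if k > 0 then b (k + 1) = b k \<and> b (k - 1) = b k + 1
        else if k < 0 then b (k - 1) = b k \<and> b (k + 1) = b k + 1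
        else b (-1) = b 0 \<and> b 0 = b 1))
    \<and> ((\<not> (P0 \<and> \<not> P1) \<and> \<not> (P1 \<and> \<not> P0)) \<longleftrightarrow>
       (if k > 0 then (b (k + 1) = b k \<and> b k = b (k - 1))
                      \<or> (b (k + 1) = b k - 1 \<and> b k - 1 = b (k - 1) - 2)
        else if k < 0 then (b (k + 1) = b k \<and> b k = b (k - 1))
                      \<or> (b (k + 1) = b k + 1 \<and> b k + 1 = b (k - 1) + 2)
        else (b (-1) = b 0 \<and> b 0 = b 1 + 1) \<or> (b 1 = b 0 \<and> b 0 = b (-1) + 1)))"
proof (cases "k = 0")
  case True
  then have "b 1 = x" "b 0 = x + (if P1 then 1 else 0)" "b (-1) = x + (if P1 then 1 else 0) + (if P0 then 1 else 0) - 1"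
    using h0 h1 h2 by simp_all
  then show ?thesis using True by (cases P0; cases P1) simp_all
next
  case False
  then show ?thesis
  proof (cases "k > 0")
    case True
    then have "b (k+1) = x" "b k = x + (if P1 then 1 else 0)" "b (k-1) = x + (if P1 then 1 else 0) + (if P0 then 1 else 0)"
      using h0 h1 h2 by simp_all
    then show ?thesis using True by (cases P0; cases P1) simp_all
  next
    case F2: False
    then have "k < 0" using False by simp
    then have "b (k+1) = x + k + 1" "b k = x + (if P1 then 1 else 0) + k" "b (k-1) = x + (if P1 then 1 else 0) + (if P0 then 1 else 0) + k - 1"
      using h0 h1 h2 by simp_all
    then show ?thesis using \<open>k < 0\<close> by (cases P0; cases P1) simp_all
  qed
qed


theorem lemma9p10:
  fixes mu :: "nat list" and k :: int
  assumes "is_partition mu"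
  defines "b \<equiv> res_coeff mu"
  shows
   "((\<exists>c. removable mu c \<and> content c = k) \<longleftrightarrow>
       (if k > 0 then b (k - 1) = b k \<and> b (k + 1) = b k - 1
        else if k < 0 then b (k + 1) = b k \<and> b (k - 1) = b k - 1
        else b (-1) = b 1 \<and> b 0 = b 1 + 1))
    \<and> ((\<exists>c. addable mu c \<and> content c = k) \<longleftrightarrow>
       (if k > 0 then b (k + 1) = b k \<and> b (k - 1) = b k + 1
        else if k < 0 then b (k - 1) = b k \<and> b (k + 1) = b k + 1
        else b (-1) = b 0 \<and> b 0 = b 1))
    \<and> ((\<not> (\<exists>c. content c = k \<and> (addable mu c \<or> removable mu c))) \<longleftrightarrow>
       (if k > 0 then (b (k + 1) = b k \<and> b k = b (k - 1))
                      \<or> (b (k + 1) = b k - 1 \<and> b k - 1 = b (k - 1) - 2)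
        else if k < 0 then (b (k + 1) = b k \<and> b k = b (k - 1))
                      \<or> (b (k + 1) = b k + 1 \<and> b k + 1 = b (k - 1) + 2)
        else (b (-1) = b 0 \<and> b 0 = b 1 + 1) \<or> (b 1 = b 0 \<and> b 0 = b (-1) + 1)))"
proof -
  have mu: "is_partition mu" by (rule assms(1))
  let ?P1 = "\<exists>i\<ge>1. ff mu i = k"
  let ?P0 = "\<exists>i\<ge>1. ff mu i = k - 1"
  define x where "x = int (card {i. 1 \<le> i \<and> k + 1 \<le> ff mu i})"
  have s1: "card {i. 1 \<le> i \<and> k \<le> ff mu i} = card {i. 1 \<le> i \<and> k + 1 \<le> ff mu i} + (if ?P1 then 1 else 0)"
    by (simp only: A_step[OF mu, of k] E_card[OF mu, of k])
  have s2: "card {i. 1 \<le> i \<and> k - 1 \<le> ff mu i} = card {i. 1 \<le> i \<and> k \<le> ff mu i} + (if ?P0 then 1 else 0)"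
    using A_step[OF mu, of "k-1"] E_card[OF mu, of "k-1"] by (simp only: diff_add_cancel)
  have h0: "b (k+1) = x - int (nat (-(k+1)))"
    unfolding b_def x_def by (rule b_formula[OF mu])
  have h1: "b k = x + (if ?P1 then 1 else 0) - int (nat (-k))"
    unfolding b_def x_def b_formula[OF mu, of k] s1 by simp
  have h2: "b (k-1) = x + (if ?P1 then 1 else 0) + (if ?P0 then 1 else 0) - int (nat (-(k-1)))"
    unfolding b_def x_def b_formula[OF mu, of "k-1"] s2 s1 by simp
  note R = arith_core[OF h0 h1 h2]
  have e3: "(\<not> (\<exists>c. content c = k \<and> (addable mu c \<or> removable mu c))) \<longleftrightarrow>
      \<not> (\<exists>c. addable mu c \<and> content c = k) \<and> \<not> (\<exists>c. removable mu c \<and> content c = k)" by blast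
  show ?thesis unfolding e3 rem_exists[OF mu] add_exists[OF mu] by (rule R)
qed

end
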